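(* Let $I_o\subseteq\mathbf{EFSym}$ be the subspace spanned by the $\mathbf S^f$ with $f$ not acyclic (i.e. $f$ has a cycle of length $\ge2$). Then $I_o$ is a Hopf ideal of $\mathbf{EFSym}$, and the quotient $\mathbf{EFSym}/I_o$ is isomorphic, as a Hopf algebra, to the Hopf subalgebra spanned by the $\mathbf S^\phi$ with $\phi$ acyclic, hence to $\mathbf H_o$.
   Context: $\mathbf{EFSym}$: over $A=\{a_{ij}:i\ne j,\ i,j\ge1\}$ with $a_{ij}\prec a_{kl}$ iff $j=k$, for $f:[n]\to[n]$, $\mathbf S^f$ is the sum of words $w_1\cdots w_n$ over $A$ with $w_{f(j)}\prec w_j$ whenever $f(j)\ne j$; these are linearly independent and span $\mathbf{EFSym}$, with product $\mathbf S^f\mathbf S^g=\mathbf S^{f\bullet g}$ (shifted concatenation: $i\mapsto f(i)$ for $i\le n$, $n+i\mapsto g(i)+n$) and coproduct $\Delta\mathbf S^f=\sum_{I\models f}\mathbf S^{\mathrm{std}(f^{[n]\setminus I})}\otimes\mathbf S^{\mathrm{std}(f^I)}$, where $I\models f$ means $f^{-1}(I)\subseteq I$, $f^I(x)=f(x)$ if $f(x)\in I$ and $x$ otherwise, and $\mathrm{std}$ conjugates by the increasing bijection $I\to[|I|]$. $\mathbf H_o$ is the Hopf algebra of ordered forests (rooted forests on vertex set $[n]$, product by shifted disjoint union, coproduct by admissible cuts), identified with the span of $\mathbf S^\phi$, $\phi$ acyclic, via $\mathcal F\mapsto\mathbf S^{f_{\mathcal F}}$ where $f_{\mathcal F}$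 maps each vertex to its parent and fixes roots. *)

theory Defs
  imports Main
begin

text \<open>Basis of EFSym: maps f : [n] -> [n], encoded 0-indexed as lists f with
  f!x < length f (so f represents x+1 |-> f!x + 1).\<close>

definition is_endo :: "nat list \<Rightarrow> bool" where
  "is_endo f \<longleftrightarrow> (\<forall>x\<in>set f. x < length f)"

definition app :: "nat list \<Rightarrow> nat \<Rightarrow> nat" where
  "app f x = (if x < length f then f ! x else x)"

definition acyclic_map :: "nat list \<Rightarrow> bool" where
  "acyclic_map f \<longleftrightarrow>
     (\<forall>x < length f. \<forall>k::nat. k \<ge> 1 \<and> (app f ^^ k) x = x \<longrightarrow> app f x = x)"

definition conc :: "nat list \<Rightarrow> nat list \<Rightarrow> nat list" where
  "conc f g = f @ map (\<lambda>x. x + length f) g"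

text \<open>std(f^J): restrict (f(x) if f(x) in J, else x) to J and standardize\<close>
definition std_restr :: "nat list \<Rightarrow> nat set \<Rightarrow> nat list" where
  "std_restr f J =
     map (\<lambda>j. card {y \<in> J. y < (if app f j \<in> J then app f j else j)})
         (sorted_list_of_set J)"

definition admissible :: "nat list \<Rightarrow> nat set \<Rightarrow> bool" where
  "admissible f I \<longleftrightarrow> I \<subseteq> {0..<length f} \<and> (\<forall>x < length f. app f x \<in> I \<longrightarrow> x \<in> I)"

text \<open>coefficient of S^a \<otimes> S^b in \<Delta> S^f\<close>
definition coprod_coeff :: "nat list \<Rightarrow> nat list \<Rightarrow> nat list \<Rightarrow> nat" where
  "coprod_coeff f a b = card {I. admissible f I \<and>
       std_restr f ({0..<length f} - I) = a \<and> std_restr f I = b}"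

text \<open>Elements of EFSym over a field: finitely supported coefficient functions
  on the basis S^f; tensors in EFSym \<otimes> EFSym: finitely supported functions on pairs.\<close>

definition supp :: "('a \<Rightarrow> 'k::zero) \<Rightarrow> 'a set" where
  "supp x = {f. x f \<noteq> 0}"

definition EFSym :: "(nat list \<Rightarrow> 'k::field) set" where
  "EFSym = {x. finite (supp x) \<and> supp x \<subseteq> {f. is_endo f}}"

definition span_basis :: "(nat list \<Rightarrow> bool) \<Rightarrow> (nat list \<Rightarrow> 'k::field) set" where
  "span_basis P = {x \<in> EFSym. \<forall>f \<in> supp x. P f}"

definition EFSym2 :: "(nat list \<times> nat list \<Rightarrow> 'k::field) set" where
  "EFSym2 = {t. finite (supp t) \<and> supp t \<subseteq> {(a,b). is_endo a \<and> is_endo b}}"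

definition bas :: "nat list \<Rightarrow> nat list \<Rightarrow> 'k::field" where
  "bas f = (\<lambda>g. if g = f then 1 else 0)"

definition mult :: "(nat list \<Rightarrow> 'k::field) \<Rightarrow> (nat list \<Rightarrow> 'k) \<Rightarrow> nat list \<Rightarrow> 'k" where
  "mult x y = (\<lambda>h. \<Sum>f\<in>supp x. \<Sum>g\<in>supp y. if conc f g = h then x f * y g else 0)"

definition unit_el :: "nat list \<Rightarrow> 'k::field" where
  "unit_el = bas []"

definition counit :: "(nat list \<Rightarrow> 'k::field) \<Rightarrow> 'k" where
  "counit x = x []"

definition coprod :: "(nat list \<Rightarrow> 'k::field) \<Rightarrow> nat list \<times> nat list \<Rightarrow> 'k" where
  "coprod x = (\<lambda>(a,b). \<Sum>f\<in>supp x. x f * of_nat (coprod_coeff f a b))"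

definition smult_el :: "'k \<Rightarrow> (nat list \<Rightarrow> 'k::field) \<Rightarrow> nat list \<Rightarrow> 'k" where
  "smult_el c x = (\<lambda>h. c * x h)"

definition linear_on :: "((nat list \<Rightarrow> 'k::field) \<Rightarrow> (nat list \<Rightarrow> 'k)) \<Rightarrow> bool" where
  "linear_on \<phi> \<longleftrightarrow> (\<forall>x\<in>EFSym. \<forall>y\<in>EFSym. \<phi> (\<lambda>h. x h + y h) = (\<lambda>h. \<phi> x h + \<phi> y h))
                 \<and> (\<forall>x\<in>EFSym. \<forall>c. \<phi> (smult_el c x) = smult_el c (\<phi> x))"

definition tensor_map ::
  "((nat list \<Rightarrow> 'k::field) \<Rightarrow> (nat list \<Rightarrow> 'k)) \<Rightarrow> ((nat list \<Rightarrow> 'k) \<Rightarrow> (nat list \<Rightarrow> 'k))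
   \<Rightarrow> (nat list \<times> nat list \<Rightarrow> 'k) \<Rightarrow> nat list \<times> nat list \<Rightarrow> 'k" where
  "tensor_map \<phi> \<psi> t = (\<lambda>(a,b). \<Sum>(c,d)\<in>supp t. t (c,d) * \<phi> (bas c) a * \<psi> (bas d) b)"

definition mult_tensor_map ::
  "((nat list \<Rightarrow> 'k::field) \<Rightarrow> (nat list \<Rightarrow> 'k)) \<Rightarrow> ((nat list \<Rightarrow> 'k) \<Rightarrow> (nat list \<Rightarrow> 'k))
   \<Rightarrow> (nat list \<times> nat list \<Rightarrow> 'k) \<Rightarrow> nat list \<Rightarrow> 'k" where
  "mult_tensor_map \<phi> \<psi> t =
     (\<lambda>h. \<Sum>(c,d)\<in>supp t. t (c,d) * mult (\<phi> (bas c)) (\<psi> (bas d)) h)"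

definition is_antipode :: "((nat list \<Rightarrow> 'k::field) \<Rightarrow> (nat list \<Rightarrow> 'k)) \<Rightarrow> bool" where
  "is_antipode S \<longleftrightarrow> S ` EFSym \<subseteq> EFSym \<and> linear_on S \<and>
     (\<forall>x\<in>EFSym. mult_tensor_map S id (coprod x) = smult_el (counit x) unit_el
               \<and> mult_tensor_map id S (coprod x) = smult_el (counit x) unit_el)"

definition I_o :: "(nat list \<Rightarrow> 'k::field) set" where
  "I_o = span_basis (\<lambda>f. \<not> acyclic_map f)"

text \<open>span of S^\<phi>, \<phi> acyclic (identified with H_o)\<close>
definition H_o :: "(nat list \<Rightarrow> 'k::field) set" where
  "H_o = span_basis acyclic_map"

text \<open>I_o \<otimes> EFSym + EFSym \<otimes> I_o (spanned by the S^a \<otimes> S^b, a or b not acyclic)\<close>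
definition I_o_tensor :: "(nat list \<times> nat list \<Rightarrow> 'k::field) set" where
  "I_o_tensor = {t \<in> EFSym2. \<forall>(a,b)\<in>supp t. \<not> acyclic_map a \<or> \<not> acyclic_map b}"

definition H_o_tensor :: "(nat list \<times> nat list \<Rightarrow> 'k::field) set" where
  "H_o_tensor = {t \<in> EFSym2. \<forall>(a,b)\<in>supp t. acyclic_map a \<and> acyclic_map b}"

definition hopf_ideal :: "(nat list \<Rightarrow> 'k::field) set \<Rightarrow> (nat list \<times> nat list \<Rightarrow> 'k) set \<Rightarrow> bool" where
  "hopf_ideal I IT \<longleftrightarrow>
     I \<subseteq> EFSym \<and>
     (\<forall>x\<in>I. \<forall>y\<in>EFSym. mult x y \<in> I \<and> mult y x \<in> I) \<and>
     (\<forall>x\<in>I. coprod x \<in> IT) \<and>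
     (\<forall>x\<in>I. counit x = 0) \<and>
     (\<forall>S. is_antipode S \<longrightarrow> S ` I \<subseteq> I)"

definition hopf_subalgebra :: "(nat list \<Rightarrow> 'k::field) set \<Rightarrow> (nat list \<times> nat list \<Rightarrow> 'k) set \<Rightarrow> bool" where
  "hopf_subalgebra B BT \<longleftrightarrow>
     B \<subseteq> EFSym \<and> unit_el \<in> B \<and>
     (\<forall>x\<in>B. \<forall>y\<in>B. mult x y \<in> B) \<and>
     (\<forall>x\<in>B. coprod x \<in> BT) \<and>
     (\<forall>S. is_antipode S \<longrightarrow> S ` B \<subseteq> B)"

text \<open>EFSym / I \<cong> B as Hopf algebras, expressed as a surjective Hopf-algebra map
  EFSym \<rightarrow> B with kernel exactly I (first isomorphism theorem).\<close>
definition quotient_iso :: "(nat list \<Rightarrow> 'k::field) set \<Rightarrow> (nat list \<Rightarrow> 'k) set \<Rightarrow> bool" where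
  "quotient_iso I B \<longleftrightarrow> (\<exists>\<pi>. linear_on \<pi> \<and> \<pi> ` EFSym = B \<and>
       {x \<in> EFSym. \<pi> x = (\<lambda>_. 0)} = I \<and>
       \<pi> unit_el = unit_el \<and>
       (\<forall>x\<in>EFSym. \<forall>y\<in>EFSym. \<pi> (mult x y) = mult (\<pi> x) (\<pi> y)) \<and>
       (\<forall>x\<in>EFSym. counit (\<pi> x) = counit x) \<and>
       (\<forall>x\<in>EFSym. coprod (\<pi> x) = tensor_map \<pi> \<pi> (coprod x)))"

end

theory Submission
  imports Defs "HOL-Library.Function_Algebras"
begin

definition acyc_on :: "nat set \<Rightarrow> (nat \<Rightarrow> nat) \<Rightarrow> bool" where
  "acyc_on J r \<longleftrightarrow> (\<forall>x\<in>J. \<forall>k::nat. k \<ge> 1 \<and> (r ^^ k) x = x \<longrightarrow> r x = x)"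

definition restr :: "nat list \<Rightarrow> nat set \<Rightarrow> nat \<Rightarrow> nat" where
  "restr f J j = (if app f j \<in> J then app f j else j)"

lemma acyclic_iff: "acyclic_map f \<longleftrightarrow> acyc_on {0..<length f} (app f)"
  unfolding acyclic_map_def acyc_on_def by auto

lemma app_endo: "is_endo f \<Longrightarrow> x < length f \<Longrightarrow> app f x < length f"
  unfolding is_endo_def app_def by auto

lemma funpow_endo: "is_endo f \<Longrightarrow> x < length f \<Longrightarrow> (app f ^^ k) x < length f"
  by (induction k) (auto simp: app_endo)

lemma periodic: "(r ^^ k) x = x \<Longrightarrow> (r ^^ (m*k)) x = x"
proof (induction m)
  case (Suc m)
  then show ?case by (simp add: funpow_add)
qed simp

lemma orbit_nonfixed:
  assumes "k \<ge> 1" "(r ^^ k) x = x" "r x \<noteq> x"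
  shows "r ((r ^^ i) x) \<noteq> (r ^^ i) x"
proof
  assume fx: "r ((r ^^ i) x) = (r ^^ i) x"
  have st: "(r ^^ (i + j)) x = (r ^^ i) x" for j
    by (induction j) (auto simp: fx)
  have "(r ^^ (i*k)) x = x" using periodic[OF assms(2)] by (simp add: mult.commute)
  moreover have "i*k = i + (i*k - i)" using assms(1) by (cases k) auto
  ultimately have "(r ^^ i) x = x" using st by metis
  then show False using fx assms(3) by simp
qed

lemma cycle_restr:
  assumes "k \<ge> 1" "(app f ^^ k) x = x" "app f x \<noteq> x"
    and inJ: "\<And>i. i \<le> k \<Longrightarrow> (app f ^^ i) x \<in> J"
  shows "\<not> acyc_on J (restr f J)"
proof -
  have eq: "i \<le> k \<Longrightarrow> (restr f J ^^ i) x = (app f ^^ i) x" for i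
  proof (induction i)
    case (Suc i)
    then have "app f ((app f ^^ i) x) \<in> J" using inJ[of "Suc i"] by simp
    then show ?case using Suc by (simp add: restr_def)
  qed simp
  have "x \<in> J" using inJ[of 0] by simp
  moreover have "(restr f J ^^ k) x = x" using eq[of k] assms by simp
  moreover have "restr f J x \<noteq> x" using eq[of 1] assms by simp
  ultimately show ?thesis using assms(1) unfolding acyc_on_def by blast
qed

lemma restr_acyc:
  assumes "acyc_on {0..<length f} (app f)" "J \<subseteq> {0..<length f}"
  shows "acyc_on J (restr f J)"
  unfolding acyc_on_def
proof (intro ballI allI impI)
  fix x k assume xJ: "x \<in> J" and kk: "1 \<le> k \<and> (restr f J ^^ k) x = x"
  show "restr f J x = x"
  proof (rule ccontr)
    let ?r = "restr f J"
    assume nf: "?r x \<noteq> x"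
    have inJ: "(?r ^^ i) x \<in> J" for i
      by (induction i) (auto simp: xJ restr_def)
    have nfi: "?r ((?r ^^ i) x) \<noteq> (?r ^^ i) x" for i
      using orbit_nonfixed[of k ?r x i] kk nf by simp
    have eq: "(?r ^^ i) x = (app f ^^ i) x" for i
    proof (induction i)
      case (Suc i)
      have "?r ((?r ^^ i) x) = app f ((?r ^^ i) x)"
        using nfi[of i] by (auto simp: restr_def split: if_splits)
      then show ?case using Suc by simp
    qed simp
    have "(app f ^^ k) x = x" using eq[of k] kk by simp
    then have "app f x = x" using assms(1) xJ assms(2) kk unfolding acyc_on_def by blast
    then show False using nf by (simp add: restr_def split: if_splits)
  qed
qed

lemma back_closed:
  assumes "admissible f I" "is_endo f" "y < length f" "(app f ^^ m) y \<in> I"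
  shows "y \<in> I"
  using assms(3,4)
proof (induction m arbitrary: y)
  case (Suc m)
  have "(app f ^^ m) (app f y) \<in> I" using Suc.prems(2) by (simp only: funpow_Suc_right o_apply)
  then have "app f y \<in> I" using Suc.IH app_endo[OF assms(2) Suc.prems(1)] by blast
  then show ?case using assms(1) Suc.prems unfolding admissible_def by blast
qed simp

lemma cyc_split:
  assumes "\<not> acyc_on {0..<length f} (app f)" "admissible f I" "is_endo f"
  shows "\<not> acyc_on I (restr f I) \<or> \<not> acyc_on ({0..<length f} - I) (restr f ({0..<length f} - I))"
proof -
  obtain x k where x: "x < length f" "k \<ge> 1" "(app f ^^ k) x = x" "app f x \<noteq> x"
    using assms(1) unfolding acyc_on_def by auto
  show ?thesis
  proof (cases "x \<in> I")
    case True
    have "(app f ^^ i) x \<in> I" if "i \<le> k" for i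
    proof -
      have "(app f ^^ (k - i)) ((app f ^^ i) x) = x"
        using that x(3) by (metis funpow_add le_add_diff_inverse2 o_apply)
      then show ?thesis using back_closed[OF assms(2,3) funpow_endo[OF assms(3) x(1)], of "k-i" i] True by simp
    qed
    then show ?thesis using cycle_restr[OF x(2,3,4)] by blast
  next
    case False
    have "(app f ^^ i) x \<in> {0..<length f} - I" for i
      using back_closed[OF assms(2,3) x(1), of i] False funpow_endo[OF assms(3) x(1)] by auto
    then show ?thesis using cycle_restr[OF x(2,3,4)] by blast
  qed
qed

definition rk :: "nat set \<Rightarrow> nat \<Rightarrow> nat" where
  "rk J y = card {z\<in>J. z < y}"

lemma std_restr_alt: "std_restr f J = map (\<lambda>j. rk J (restr f J j)) (sorted_list_of_set J)"
  unfolding std_restr_def rk_def restr_def by simp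

lemma length_std: "finite J \<Longrightarrow> length (std_restr f J) = card J"
  by (simp add: std_restr_def)

lemma rk_nth:
  assumes "finite J" "i < card J"
  shows "rk J (sorted_list_of_set J ! i) = i"
proof -
  let ?e = "sorted_list_of_set J"
  have ss: "sorted_wrt (<) ?e" using assms(1) by (simp add: strict_sorted_list_of_set)
  have le: "length ?e = card J" using assms(1) by simp
  have dis: "distinct ?e" using assms(1) by simp
  have setJ: "set ?e = J" using assms(1) by simp
  have "{z\<in>J. z < ?e ! i} = set (take i ?e)"
  proof (intro set_eqI iffI)
    fix y assume y: "y \<in> {z\<in>J. z < ?e ! i}"
    then have "y \<in> set ?e" using setJ by simp
    then obtain j where j: "j < length ?e" "y = ?e ! j" by (auto simp: in_set_conv_nth)
    have "j < i"
    proof (rule ccontr)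
      assume "\<not> j < i"
      then have "i = j \<or> i < j" by auto
      then have "?e ! i \<le> ?e ! j" using ss j(1) sorted_wrt_nth_less[OF ss, of i j] by auto
      then show False using y j by auto
    qed
    then show "y \<in> set (take i ?e)" using j by (auto simp: in_set_conv_nth)
  next
    fix y assume "y \<in> set (take i ?e)"
    then obtain j where j: "j < i" "y = ?e ! j" using assms le by (auto simp: in_set_conv_nth)
    then have "y < ?e ! i" using sorted_wrt_nth_less[OF ss, of j i] assms le by auto
    moreover have "j < length ?e" using j assms le by simp
    then have "?e ! j \<in> set ?e" by (rule nth_mem)
    then have "y \<in> J" using j setJ by simp
    ultimately show "y \<in> {z\<in>J. z < ?e ! i}" by simp
  qed
  then show ?thesis unfolding rk_def using distinct_card[of "take i ?e"] dis assms le by simp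
qed

lemma nth_rk:
  assumes "finite J" "y \<in> J"
  shows "rk J y < card J \<and> sorted_list_of_set J ! rk J y = y"
proof -
  obtain i where i: "i < length (sorted_list_of_set J)" "y = sorted_list_of_set J ! i"
    using assms by (metis in_set_conv_nth set_sorted_list_of_set)
  then show ?thesis using rk_nth[OF assms(1), of i] assms(1) by simp
qed

lemma restr_in: "j \<in> J \<Longrightarrow> restr f J j \<in> J"
  by (simp add: restr_def)

lemma restr_pow_in: "j \<in> J \<Longrightarrow> (restr f J ^^ n) j \<in> J"
  by (induction n) (auto simp: restr_in)

lemma nth_in: "finite J \<Longrightarrow> i < card J \<Longrightarrow> sorted_list_of_set J ! i \<in> J"
  by (metis length_sorted_list_of_set nth_mem set_sorted_list_of_set)

lemma std_app:
  assumes "finite J" "i < card J"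
  shows "app (std_restr f J) i = rk J (restr f J (sorted_list_of_set J ! i))"
proof -
  have "i < length (std_restr f J)" using assms by (simp add: length_std)
  then have "app (std_restr f J) i = std_restr f J ! i" by (simp add: app_def)
  also have "\<dots> = rk J (restr f J (sorted_list_of_set J ! i))"
    unfolding std_restr_alt using assms by simp
  finally show ?thesis .
qed

lemma std_pow:
  assumes "finite J" "i < card J"
  shows "(app (std_restr f J) ^^ n) i = rk J ((restr f J ^^ n) (sorted_list_of_set J ! i))"
proof (induction n)
  case 0
  then show ?case using rk_nth[OF assms] by simp
next
  case (Suc n)
  let ?y = "(restr f J ^^ n) (sorted_list_of_set J ! i)"
  have yJ: "?y \<in> J" by (rule restr_pow_in[OF nth_in[OF assms]])
  have "(app (std_restr f J) ^^ Suc n) i = app (std_restr f J) (rk J ?y)" using Suc by simp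
  also have "\<dots> = rk J (restr f J ?y)"
    using std_app[OF assms(1), of "rk J ?y" f] nth_rk[OF assms(1) yJ] by simp
  finally show ?case by simp
qed

lemma rk_inj: "finite J \<Longrightarrow> y \<in> J \<Longrightarrow> z \<in> J \<Longrightarrow> rk J y = rk J z \<Longrightarrow> y = z"
proof -
  assume a: "finite J" "y \<in> J" "z \<in> J" "rk J y = rk J z"
  have "sorted_list_of_set J ! rk J y = y" using nth_rk[OF a(1) a(2)] by (rule conjunct2)
  moreover have "sorted_list_of_set J ! rk J z = z" using nth_rk[OF a(1) a(3)] by (rule conjunct2)
  ultimately show ?thesis using a(4) by metis
qed

lemma std_acyc:
  assumes "finite J"
  shows "acyclic_map (std_restr f J) \<longleftrightarrow> acyc_on J (restr f J)"
proof -
  let ?e = "sorted_list_of_set J"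
  have key: "(app (std_restr f J) ^^ n) i = i \<longleftrightarrow> (restr f J ^^ n) (?e ! i) = ?e ! i"
    if "i < card J" for i n
  proof -
    have a: "?e ! i \<in> J" using nth_in[OF assms that] .
    have "(app (std_restr f J) ^^ n) i = i \<longleftrightarrow> rk J ((restr f J ^^ n) (?e ! i)) = rk J (?e ! i)"
      using std_pow[OF assms that] rk_nth[OF assms that] by simp
    also have "\<dots> \<longleftrightarrow> (restr f J ^^ n) (?e ! i) = ?e ! i"
    proof
      assume "rk J ((restr f J ^^ n) (?e ! i)) = rk J (?e ! i)"
      then show "(restr f J ^^ n) (?e ! i) = ?e ! i"
        using rk_inj[OF assms restr_pow_in[OF a, where f=f and n=n] a] by blast
    qed simp
    finally show ?thesis .
  qed
  have key1: "app (std_restr f J) i = i \<longleftrightarrow> restr f J (?e ! i) = ?e ! i" if "i < card J" for i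
    using key[OF that, of 1] by simp
  show ?thesis
    unfolding acyclic_iff acyc_on_def length_std[OF assms]
  proof safe
    fix x k assume H: "\<forall>x\<in>{0..<card J}. \<forall>k. 1 \<le> k \<and> (app (std_restr f J) ^^ k) x = x \<longrightarrow> app (std_restr f J) x = x"
      and x: "x \<in> J" "1 \<le> k" "(restr f J ^^ k) x = x"
    define i where "i = rk J x"
    have i: "i < card J" "x = ?e ! i" using nth_rk[OF assms x(1)] unfolding i_def by auto
    have "(app (std_restr f J) ^^ k) i = i" using key[OF i(1), of k] i(2) x(3) by simp
    then have "app (std_restr f J) i = i" using H i(1) x(2) by auto
    then show "restr f J x = x" using key1[OF i(1)] i(2) by simp
  next
    fix i k assume H: "\<forall>x\<in>J. \<forall>k. 1 \<le> k \<and> (restr f J ^^ k) x = x \<longrightarrow> restr f J x = x"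
      and i: "i \<in> {0..<card J}" "1 \<le> k" "(app (std_restr f J) ^^ k) i = i"
    have "?e ! i \<in> J" using nth_in[OF assms] i by simp
    moreover have "(restr f J ^^ k) (?e ! i) = ?e ! i" using key[of i k] i by simp
    ultimately have "restr f J (?e ! i) = ?e ! i" using H i(2) by blast
    then show "app (std_restr f J) i = i" using key1[of i] i(1) by simp
  qed
qed

lemma std_endo: "finite J \<Longrightarrow> is_endo (std_restr f J)"
  unfolding is_endo_def length_std std_restr_alt
  by (auto simp: restr_in nth_rk)

lemma std_full: "is_endo f \<Longrightarrow> std_restr f {0..<length f} = f"
proof -
  assume e: "is_endo f"
  have r: "rk {0..<n} y = y" if "y < n" for y n
  proof -
    have "{z \<in> {0..<n}. z < y} = {0..<y}" using that by auto
    then show ?thesis by (simp add: rk_def)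
  qed
  show ?thesis unfolding std_restr_alt
  proof (rule nth_equalityI)
    fix i assume "i < length (map (\<lambda>j. rk {0..<length f} (restr f {0..<length f} j)) (sorted_list_of_set {0..<length f}))"
    then have i: "i < length f" by simp
    have "f ! i < length f" using e i unfolding is_endo_def by simp
    then show "map (\<lambda>j. rk {0..<length f} (restr f {0..<length f} j)) (sorted_list_of_set {0..<length f}) ! i = f ! i"
      using i by (simp add: restr_def app_def r)
  qed simp
qed

lemma std_empty: "std_restr f {} = []"
  by (simp add: std_restr_def)

lemma std_nil: "finite J \<Longrightarrow> std_restr f J = [] \<Longrightarrow> J = {}"
proof -
  assume a: "finite J" "std_restr f J = []"
  have "card J = 0" using length_std[OF a(1), of f] a(2) by simp
  then show ?thesis using a(1) by simp
qed

lemma length_conc: "length (conc f g) = length f + length g"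
  by (simp add: conc_def)

lemma endo_conc: "is_endo f \<Longrightarrow> is_endo g \<Longrightarrow> is_endo (conc f g)"
  unfolding is_endo_def conc_def by auto

lemma app_conc1: "x < length f \<Longrightarrow> app (conc f g) x = app f x"
  by (simp add: app_def conc_def nth_append)

lemma app_conc2: "length f \<le> x \<Longrightarrow> app (conc f g) x = app g (x - length f) + length f"
  by (auto simp: app_def conc_def nth_append)

lemma pow_conc1: "is_endo f \<Longrightarrow> x < length f \<Longrightarrow> (app (conc f g) ^^ k) x = (app f ^^ k) x"
proof (induction k)
  case (Suc k)
  then show ?case using funpow_endo[of f x k] app_conc1 by simp
qed simp

lemma pow_conc2: "length f \<le> x \<Longrightarrow> (app (conc f g) ^^ k) x = (app g ^^ k) (x - length f) + length f"
proof (induction k)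
  case (Suc k)
  then show ?case using app_conc2 by simp
qed simp

lemma acyc_conc:
  assumes "is_endo f" "is_endo g"
  shows "acyclic_map (conc f g) \<longleftrightarrow> acyclic_map f \<and> acyclic_map g"
proof -
  let ?n = "length f"
  have A: "(\<forall>x < length (conc f g). P x) \<longleftrightarrow> (\<forall>x < ?n. P x) \<and> (\<forall>y < length g. P (y + ?n))" for P
  proof
    assume "\<forall>x < length (conc f g). P x"
    then show "(\<forall>x < ?n. P x) \<and> (\<forall>y < length g. P (y + ?n))" by (simp add: length_conc)
  next
    assume H: "(\<forall>x < ?n. P x) \<and> (\<forall>y < length g. P (y + ?n))"
    show "\<forall>x < length (conc f g). P x"
    proof (intro allI impI)
      fix x assume "x < length (conc f g)"
      then show "P x" using H[THEN conjunct2, rule_format, of "x - ?n"] H length_conc[of f g]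
        by (cases "x < ?n") auto
    qed
  qed
  have B1: "(app (conc f g) ^^ k) x = x \<longleftrightarrow> (app f ^^ k) x = x" if "x < ?n" for x k
    using pow_conc1[OF assms(1) that] by simp
  have B2: "(app (conc f g) ^^ k) (y + ?n) = y + ?n \<longleftrightarrow> (app g ^^ k) y = y" for y k
    using pow_conc2[where f=f and x="y + ?n" and g=g and k=k] by simp
  have B1': "app (conc f g) x = x \<longleftrightarrow> app f x = x" if "x < ?n" for x
    using B1[OF that, of 1] by simp
  have B2': "app (conc f g) (y + ?n) = y + ?n \<longleftrightarrow> app g y = y" for y
    using B2[of 1 y] by simp
  show ?thesis unfolding acyclic_map_def A
    using B1 B2 B1' B2' by simp
qed

lemma supp_bas: "supp (bas f :: nat list \<Rightarrow> 'k::field) = {f}"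
  by (auto simp: supp_def bas_def)

lemma bas_EFSym: "is_endo f \<Longrightarrow> (bas f :: nat list \<Rightarrow> 'k::field) \<in> EFSym"
  by (simp add: EFSym_def supp_bas)

lemma bas_apply: "bas f g = (if g = f then 1 else 0)"
  by (simp add: bas_def)

lemma acyc_nil: "acyclic_map []"
  by (simp add: acyclic_map_def)

lemma sum_nz: "(\<Sum>a\<in>A. g a) \<noteq> (0::'a::comm_monoid_add) \<Longrightarrow> \<exists>a\<in>A. g a \<noteq> 0"
  by (meson sum.neutral)

lemma mult_supp:
  assumes "h \<in> supp (mult x y)"
  shows "\<exists>f\<in>supp x. \<exists>g\<in>supp y. h = conc f g"
proof -
  have "mult x y h \<noteq> 0" using assms by (simp add: supp_def)
  then obtain f where f: "f \<in> supp x" "(\<Sum>g\<in>supp y. if conc f g = h then x f * y g else 0) \<noteq> 0"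
    unfolding mult_def using sum_nz by blast
  then obtain g where g: "g \<in> supp y" "(if conc f g = h then x f * y g else 0) \<noteq> 0"
    using sum_nz by blast
  then have "conc f g = h" by (metis (full_types))
  then show ?thesis using f g by blast
qed

lemma mult_EFSym:
  assumes "x \<in> EFSym" "y \<in> EFSym"
  shows "mult x y \<in> EFSym"
proof -
  have sub: "supp (mult x y) \<subseteq> (\<lambda>(f,g). conc f g) ` (supp x \<times> supp y)"
    using mult_supp by fastforce
  have "finite (supp x)" "finite (supp y)" using assms by (auto simp: EFSym_def)
  then have "finite (supp (mult x y))" using sub by (meson finite_SigmaI finite_imageI finite_subset)
  moreover have "supp (mult x y) \<subseteq> {f. is_endo f}"
  proof
    fix h assume "h \<in> supp (mult x y)"
    then obtain f g where "f \<in> supp x" "g \<in> supp y" "h = conc f g" using mult_supp by blast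
    then show "h \<in> {f. is_endo f}" using assms endo_conc unfolding EFSym_def by blast
  qed
  ultimately show ?thesis by (simp add: EFSym_def)
qed

lemma mult_sup:
  assumes "finite A" "supp x \<subseteq> A" "finite B" "supp y \<subseteq> B"
  shows "mult x y h = (\<Sum>f\<in>A. \<Sum>g\<in>B. if conc f g = h then x f * y g else 0)"
proof -
  have "mult x y h = (\<Sum>f\<in>supp x. \<Sum>g\<in>B. if conc f g = h then x f * y g else 0)"
    unfolding mult_def
  proof (rule sum.cong[OF refl])
    fix f show "(\<Sum>g\<in>supp y. if conc f g = h then x f * y g else 0)
      = (\<Sum>g\<in>B. if conc f g = h then x f * y g else 0)"
      by (rule sum.mono_neutral_left) (use assms in \<open>auto simp: supp_def\<close>)
  qed
  also have "\<dots> = (\<Sum>f\<in>A. \<Sum>g\<in>B. if conc f g = h then x f * y g else 0)"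
  proof (rule sum.mono_neutral_left[OF assms(1) assms(2)])
    show "\<forall>i\<in>A - supp x. (\<Sum>g\<in>B. if conc i g = h then x i * y g else 0) = 0"
    proof
      fix i assume "i \<in> A - supp x"
      then have "x i = 0" by (simp add: supp_def)
      then show "(\<Sum>g\<in>B. if conc i g = h then x i * y g else 0) = 0"
        by (intro sum.neutral) simp
    qed
  qed
  finally show ?thesis .
qed

lemma conc_nil: "conc f [] = f"
  by (simp add: conc_def)

lemma mult_unit_right:
  assumes "finite (supp z)"
  shows "mult z (bas []) h = z h"
proof -
  have "mult z (bas []) h = (\<Sum>f\<in>supp z. if f = h then z f else 0)"
    unfolding mult_def supp_bas
  proof (rule sum.cong[OF refl])
    fix f
    have "(bas [] [] :: 'a) = 1" by (simp add: bas_def)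
    then show "(\<Sum>g\<in>{[]}. if conc f g = h then z f * bas [] g else 0) = (if f = h then z f else 0)"
      by (simp add: conc_nil)
  qed
  also have "\<dots> = z h"
    using assms by (simp add: sum.delta' supp_def)
  finally show ?thesis .
qed

lemma sum_fun_apply: "(sum v A) h = (\<Sum>a\<in>A. v a h)"
  by (induction A rule: infinite_finite_induct) auto

lemma coeff_nz:
  assumes "coprod_coeff f a b \<noteq> 0"
  shows "\<exists>I. admissible f I \<and> std_restr f ({0..<length f} - I) = a \<and> std_restr f I = b"
proof -
  have "{I. admissible f I \<and> std_restr f ({0..<length f} - I) = a \<and> std_restr f I = b} \<noteq> {}"
    using assms unfolding coprod_coeff_def by (metis card.empty)
  then show ?thesis by blast
qed

lemma adm_fin: "admissible f I \<Longrightarrow> finite I"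
  unfolding admissible_def using finite_subset by blast

lemma coprod_supp:
  assumes "p \<in> supp (coprod x)"
  shows "\<exists>f\<in>supp x. coprod_coeff f (fst p) (snd p) \<noteq> 0"
proof -
  obtain a b where p: "p = (a,b)" by fastforce
  have "(\<Sum>f\<in>supp x. x f * of_nat (coprod_coeff f a b)) \<noteq> 0"
    using assms p by (simp add: supp_def coprod_def)
  then obtain f where "f \<in> supp x" "x f * of_nat (coprod_coeff f a b) \<noteq> 0" using sum_nz by blast
  then have "coprod_coeff f a b \<noteq> 0" by (metis mult_zero_right of_nat_0)
  then show ?thesis using p \<open>f \<in> supp x\<close> by auto
qed

lemma coprod_EFSym2:
  assumes "x \<in> EFSym"
  shows "coprod x \<in> EFSym2"
proof -
  have fx: "finite (supp x)" using assms by (simp add: EFSym_def)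
  have sub: "supp (coprod x) \<subseteq> (\<Union>f\<in>supp x. (\<lambda>I. (std_restr f ({0..<length f} - I), std_restr f I)) ` Pow {0..<length f})"
  proof
    fix p assume "p \<in> supp (coprod x)"
    then obtain f where f: "f \<in> supp x" "coprod_coeff f (fst p) (snd p) \<noteq> 0" using coprod_supp by blast
    then obtain I where I: "admissible f I" "std_restr f ({0..<length f} - I) = fst p" "std_restr f I = snd p"
      using coeff_nz by blast
    have "I \<in> Pow {0..<length f}" using I(1) unfolding admissible_def by auto
    then show "p \<in> (\<Union>f\<in>supp x. (\<lambda>I. (std_restr f ({0..<length f} - I), std_restr f I)) ` Pow {0..<length f})"
      using f(1) I(2,3) by (metis (no_types, lifting) UN_I image_eqI prod.collapse)
  qed
  have "finite (supp (coprod x))" by (rule finite_subset[OF sub]) (use fx in auto)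
  moreover have "supp (coprod x) \<subseteq> {(a,b). is_endo a \<and> is_endo b}"
  proof
    fix p assume "p \<in> supp (coprod x)"
    then obtain f where f: "f \<in> supp x" "coprod_coeff f (fst p) (snd p) \<noteq> 0" using coprod_supp by blast
    then obtain I where I: "admissible f I" "std_restr f ({0..<length f} - I) = fst p" "std_restr f I = snd p"
      using coeff_nz by blast
    have "is_endo (fst p)" using I(2) std_endo[of "{0..<length f} - I" f] by simp
    moreover have "is_endo (snd p)" using I(3) std_endo[OF adm_fin[OF I(1)], of f] by simp
    ultimately show "p \<in> {(a,b). is_endo a \<and> is_endo b}" by (cases p) simp
  qed
  ultimately show ?thesis by (simp add: EFSym2_def)
qed

lemma coprod_bas: "coprod (bas f :: nat list \<Rightarrow> 'k::field) p = of_nat (coprod_coeff f (fst p) (snd p))"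
  unfolding coprod_def supp_bas by (simp add: bas_apply case_prod_beta)

lemma coeff_f_nil:
  assumes "is_endo f"
  shows "coprod_coeff f f [] = 1"
proof -
  have "{I. admissible f I \<and> std_restr f ({0..<length f} - I) = f \<and> std_restr f I = []} = {{}::nat set}"
  proof (intro set_eqI iffI)
    fix I assume "I \<in> {I. admissible f I \<and> std_restr f ({0..<length f} - I) = f \<and> std_restr f I = []}"
    then show "I \<in> {{}::nat set}" using std_nil adm_fin by blast
  next
    fix I assume "I \<in> {{}::nat set}"
    then show "I \<in> {I. admissible f I \<and> std_restr f ({0..<length f} - I) = f \<and> std_restr f I = []}"
      using std_full[OF assms] std_empty by (simp add: admissible_def)
  qed
  then show ?thesis by (simp add: coprod_coeff_def)
qed

lemma coeff_acyc:
  assumes "is_endo f" "coprod_coeff f a b \<noteq> 0"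
  shows "acyclic_map f \<longleftrightarrow> acyclic_map a \<and> acyclic_map b"
proof -
  obtain I where I: "admissible f I" "std_restr f ({0..<length f} - I) = a" "std_restr f I = b"
    using coeff_nz[OF assms(2)] by blast
  have Isub: "I \<subseteq> {0..<length f}" using I(1) by (simp add: admissible_def)
  have a: "acyclic_map a \<longleftrightarrow> acyc_on ({0..<length f} - I) (restr f ({0..<length f} - I))"
    using std_acyc[of "{0..<length f} - I" f] I(2) by simp
  have b: "acyclic_map b \<longleftrightarrow> acyc_on I (restr f I)"
    using std_acyc[OF adm_fin[OF I(1)], of f] I(3) by simp
  show ?thesis
  proof
    assume "acyclic_map f"
    then have "acyc_on {0..<length f} (app f)" by (simp add: acyclic_iff)
    then show "acyclic_map a \<and> acyclic_map b"
      using a b restr_acyc Isub by blast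
  next
    assume "acyclic_map a \<and> acyclic_map b"
    then show "acyclic_map f"
      using a b cyc_split[OF _ I(1) assms(1)] by (auto simp: acyclic_iff)
  qed
qed

lemma EFSym_add:
  assumes "x \<in> EFSym" "y \<in> EFSym" shows "x + y \<in> EFSym"
proof -
  have "supp (x + y) \<subseteq> supp x \<union> supp y" by (auto simp: supp_def)
  then show ?thesis using assms unfolding EFSym_def by (auto intro: finite_subset)
qed

lemma EFSym_smult: "x \<in> EFSym \<Longrightarrow> smult_el c x \<in> EFSym"
proof -
  assume x: "x \<in> EFSym"
  have "supp (smult_el c x) \<subseteq> supp x" by (auto simp: supp_def smult_el_def)
  then show ?thesis using x unfolding EFSym_def by (auto intro: finite_subset)
qed

lemma EFSym_zero: "(0 :: nat list \<Rightarrow> 'k::field) \<in> EFSym"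
  by (simp add: EFSym_def supp_def)

lemma EFSym_sum: "finite A \<Longrightarrow> (\<forall>a\<in>A. v a \<in> EFSym) \<Longrightarrow> sum v A \<in> EFSym"
  by (induction A rule: finite_induct) (auto simp: EFSym_zero EFSym_add)

lemma lin_add:
  assumes "linear_on S" "x \<in> EFSym" "y \<in> EFSym"
  shows "S (x + y) = S x + S y"
proof -
  have "S (\<lambda>h. x h + y h) = (\<lambda>h. S x h + S y h)" using assms unfolding linear_on_def by blast
  then show ?thesis by (simp add: plus_fun_def)
qed

lemma lin_smult: "linear_on S \<Longrightarrow> x \<in> EFSym \<Longrightarrow> S (smult_el c x) = smult_el c (S x)"
  unfolding linear_on_def by blast

lemma lin_zero:
  assumes "linear_on S" shows "S (0 :: nat list \<Rightarrow> 'k::field) = 0"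
proof -
  have z: "smult_el 0 (0 :: nat list \<Rightarrow> 'k) = 0" by (simp add: smult_el_def fun_eq_iff)
  have "S (smult_el 0 (0 :: nat list \<Rightarrow> 'k)) = smult_el 0 (S 0)"
    using lin_smult[OF assms EFSym_zero] .
  then show ?thesis using z by (simp add: smult_el_def zero_fun_def)
qed

lemma lin_sum:
  assumes "linear_on S"
  shows "finite A \<Longrightarrow> (\<forall>a\<in>A. v a \<in> EFSym) \<Longrightarrow> S (sum v A) = (\<Sum>a\<in>A. S (v a))"
proof (induction A rule: finite_induct)
  case empty
  then show ?case using lin_zero[OF assms] by (simp add: zero_fun_def)
next
  case (insert a A)
  have "S (sum v (insert a A)) = S (v a + sum v A)" by (simp only: sum.insert[OF insert(1,2)])
  also have "\<dots> = S (v a) + S (sum v A)"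
    using lin_add[OF assms] insert.prems EFSym_sum[OF insert(1), of v] by simp
  also have "\<dots> = S (v a) + (\<Sum>a\<in>A. S (v a))" using insert.IH insert.prems by simp
  also have "\<dots> = (\<Sum>a\<in>insert a A. S (v a))" by (simp only: sum.insert[OF insert(1,2)])
  finally show ?case .
qed

lemma decomp:
  assumes "x \<in> EFSym"
  shows "x = (\<Sum>f\<in>supp x. smult_el (x f) (bas f))"
proof
  fix h
  have fin: "finite (supp x)" using assms by (simp add: EFSym_def)
  have "(\<Sum>f\<in>supp x. smult_el (x f) (bas f)) h = (\<Sum>f\<in>supp x. if h = f then x f else 0)"
    unfolding sum_fun_apply by (rule sum.cong) (auto simp: smult_el_def bas_def)
  also have "\<dots> = x h" using fin by (simp add: sum.delta supp_def)
  finally show "x h = (\<Sum>f\<in>supp x. smult_el (x f) (bas f)) h" by simp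
qed

lemma S_lin:
  assumes "linear_on S" "x \<in> EFSym" "S x h \<noteq> 0"
  shows "\<exists>f\<in>supp x. S (bas f) h \<noteq> 0"
proof -
  have fin: "finite (supp x)" using assms by (simp add: EFSym_def)
  have bE: "\<forall>f\<in>supp x. bas f \<in> EFSym" using assms(2) bas_EFSym unfolding EFSym_def by blast
  have "S x = S (\<Sum>f\<in>supp x. smult_el (x f) (bas f))" using decomp[OF assms(2)] by simp
  also have "\<dots> = (\<Sum>f\<in>supp x. S (smult_el (x f) (bas f)))"
  proof -
    have "\<forall>f\<in>supp x. smult_el (x f) (bas f) \<in> EFSym" using bE EFSym_smult by blast
    then show ?thesis by (rule lin_sum[OF assms(1) fin])
  qed
  also have "\<dots> = (\<Sum>f\<in>supp x. smult_el (x f) (S (bas f)))"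
    by (rule sum.cong[OF refl]) (simp add: lin_smult[OF assms(1)] bE)
  finally have "S x h = (\<Sum>f\<in>supp x. x f * S (bas f) h)"
    by (simp add: sum_fun_apply smult_el_def)
  then have "(\<Sum>f\<in>supp x. x f * S (bas f) h) \<noteq> 0" using assms(3) by simp
  then obtain f where "f \<in> supp x" "x f * S (bas f) h \<noteq> 0" using sum_nz by blast
  then show ?thesis by (metis mult_zero_right)
qed

lemma coeff_endo:
  assumes "coprod_coeff f c d \<noteq> 0" shows "is_endo c \<and> is_endo d"
proof -
  obtain I where I: "admissible f I" "std_restr f ({0..<length f} - I) = c" "std_restr f I = d"
    using coeff_nz[OF assms] by blast
  show ?thesis using I std_endo[of "{0..<length f} - I" f] std_endo[OF adm_fin[OF I(1)], of f] by simp
qed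

lemma antipode_basis:
  fixes S :: "(nat list \<Rightarrow> 'k::field) \<Rightarrow> nat list \<Rightarrow> 'k"
  assumes S: "is_antipode S" and e: "is_endo f" and h: "S (bas f) h \<noteq> 0"
  shows "(f = [] \<and> h = []) \<or> (\<exists>c d. length c < length f \<and> coprod_coeff f c d \<noteq> 0 \<and> h \<in> supp (mult (S (bas c)) (bas d)))"
proof -
  let ?T = "supp (coprod (bas f :: nat list \<Rightarrow> 'k))"
  define F where "F p = coprod (bas f :: nat list \<Rightarrow> 'k) p * mult (S (bas (fst p))) (bas (snd p)) h" for p
  have bf: "(bas f :: nat list \<Rightarrow> 'k) \<in> EFSym" using bas_EFSym[OF e] .
  have finT: "finite ?T" using coprod_EFSym2[OF bf] by (simp add: EFSym2_def)
  have eq: "mult_tensor_map S id (coprod (bas f)) = smult_el (counit (bas f)) unit_el"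
    using S bf unfolding is_antipode_def by blast
  have tot: "(\<Sum>p\<in>?T. F p) = counit (bas f :: nat list \<Rightarrow> 'k) * unit_el h"
    using fun_cong[OF eq, of h] unfolding mult_tensor_map_def smult_el_def F_def by (simp add: case_prod_beta)
  have c1: "coprod (bas f :: nat list \<Rightarrow> 'k) (f, []) = 1"
  proof -
    have "coprod (bas f :: nat list \<Rightarrow> 'k) (f, []) = of_nat (coprod_coeff f f [])"
      using coprod_bas[of f "(f,[])"] by simp
    also have "\<dots> = 1" using coeff_f_nil[OF e] by simp
    finally show ?thesis .
  qed
  have mem: "(f, []) \<in> ?T" using c1 by (simp add: supp_def)
  have SbE: "S (bas f) \<in> EFSym" using S bf unfolding is_antipode_def by blast
  have Ff: "F (f,[]) = S (bas f) h"
    using c1 mult_unit_right[of "S (bas f)" h] SbE by (simp add: F_def EFSym_def)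
  have split: "(\<Sum>p\<in>?T. F p) = F (f,[]) + (\<Sum>p\<in>?T - {(f,[])}. F p)" by (rule sum.remove[OF finT mem])
  show ?thesis
  proof (cases "(\<Sum>p\<in>?T - {(f,[])}. F p) = 0")
    case True
    then have "S (bas f) h = counit (bas f :: nat list \<Rightarrow> 'k) * unit_el h" using tot split Ff by simp
    then have "counit (bas f :: nat list \<Rightarrow> 'k) \<noteq> 0" "(unit_el h :: 'k) \<noteq> 0" using h by auto
    then have "f = [] \<and> h = []" by (auto simp: counit_def unit_el_def bas_def split: if_splits)
    then show ?thesis by blast
  next
    case False
    then obtain p where p: "p \<in> ?T - {(f,[])}" "F p \<noteq> 0" using sum_nz by blast
    have cp: "coprod (bas f :: nat list \<Rightarrow> 'k) p \<noteq> 0" "mult (S (bas (fst p))) (bas (snd p)) h \<noteq> 0"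
      using p(2) by (auto simp: F_def)
    have cc: "coprod_coeff f (fst p) (snd p) \<noteq> 0" using cp(1) coprod_bas by (metis of_nat_0)
    obtain I where I: "admissible f I" "std_restr f ({0..<length f} - I) = fst p" "std_restr f I = snd p"
      using coeff_nz[OF cc] by blast
    have "I \<noteq> {}"
    proof
      assume "I = {}"
      then have "p = (f, [])" using I std_full[OF e] std_empty by (metis Diff_empty prod.collapse)
      then show False using p(1) by simp
    qed
    moreover have Isub: "I \<subseteq> {0..<length f}" using I(1) by (simp add: admissible_def)
    ultimately have "card I > 0" using finite_subset[OF Isub] by (simp add: card_gt_0_iff)
    moreover have "card ({0..<length f} - I) = length f - card I"
      using card_Diff_subset[OF finite_subset[OF Isub] Isub] by simp
    moreover have "card I \<le> length f" using card_mono[OF _ Isub] by simp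
    ultimately have "length (fst p) < length f" using I(2) length_std[of "{0..<length f} - I" f] by simp
    then show ?thesis using cc cp(2) by (auto simp: supp_def)
  qed
qed

lemma S_EFSym: "is_antipode S \<Longrightarrow> x \<in> EFSym \<Longrightarrow> S x \<in> EFSym"
  unfolding is_antipode_def by blast

lemma antipode_I:
  fixes S :: "(nat list \<Rightarrow> 'k::field) \<Rightarrow> nat list \<Rightarrow> 'k"
  assumes S: "is_antipode S"
  shows "is_endo f \<Longrightarrow> \<not> acyclic_map f \<Longrightarrow> h \<in> supp (S (bas f)) \<Longrightarrow> \<not> acyclic_map h"
proof (induction "length f" arbitrary: f h rule: less_induct)
  case less
  have "S (bas f) h \<noteq> 0" using less.prems(3) by (simp add: supp_def)
  from antipode_basis[OF S less.prems(1) this] less.prems(2) acyc_nil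
  obtain c d where cd: "length c < length f" "coprod_coeff f c d \<noteq> 0" "h \<in> supp (mult (S (bas c)) (bas d))"
    by blast
  obtain g d' where g: "g \<in> supp (S (bas c))" "d' \<in> supp (bas d :: nat list \<Rightarrow> 'k)" "h = conc g d'"
    using mult_supp[OF cd(3)] by blast
  have dd: "d' = d" using g(2) supp_bas by auto
  have en: "is_endo c" "is_endo d" using coeff_endo[OF cd(2)] by auto
  have ge: "is_endo g" using S_EFSym[OF S bas_EFSym[OF en(1)]] g(1) by (auto simp: EFSym_def)
  have "\<not> acyclic_map c \<or> \<not> acyclic_map d" using coeff_acyc[OF less.prems(1) cd(2)] less.prems(2) by blast
  then show ?case
  proof
    assume "\<not> acyclic_map c"
    then have "\<not> acyclic_map g" using less.hyps[OF cd(1) en(1) _ g(1)] by blast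
    then show ?thesis using acyc_conc[OF ge en(2)] g(3) dd by simp
  next
    assume "\<not> acyclic_map d"
    then show ?thesis using acyc_conc[OF ge en(2)] g(3) dd by simp
  qed
qed

lemma antipode_H:
  fixes S :: "(nat list \<Rightarrow> 'k::field) \<Rightarrow> nat list \<Rightarrow> 'k"
  assumes S: "is_antipode S"
  shows "is_endo f \<Longrightarrow> acyclic_map f \<Longrightarrow> h \<in> supp (S (bas f)) \<Longrightarrow> acyclic_map h"
proof (induction "length f" arbitrary: f h rule: less_induct)
  case less
  have "S (bas f) h \<noteq> 0" using less.prems(3) by (simp add: supp_def)
  from antipode_basis[OF S less.prems(1) this]
  show ?case
  proof
    assume "f = [] \<and> h = []" then show ?thesis using acyc_nil by simp
  next
    assume "\<exists>c d. length c < length f \<and> coprod_coeff f c d \<noteq> 0 \<and> h \<in> supp (mult (S (bas c)) (bas d))"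
    then obtain c d where cd: "length c < length f" "coprod_coeff f c d \<noteq> 0" "h \<in> supp (mult (S (bas c)) (bas d))"
      by blast
    obtain g d' where g: "g \<in> supp (S (bas c))" "d' \<in> supp (bas d :: nat list \<Rightarrow> 'k)" "h = conc g d'"
      using mult_supp[OF cd(3)] by blast
    have dd: "d' = d" using g(2) supp_bas by auto
    have en: "is_endo c" "is_endo d" using coeff_endo[OF cd(2)] by auto
    have ge: "is_endo g" using S_EFSym[OF S bas_EFSym[OF en(1)]] g(1) by (auto simp: EFSym_def)
    have "acyclic_map c" "acyclic_map d" using coeff_acyc[OF less.prems(1) cd(2)] less.prems(2) by blast+
    then have "acyclic_map g" using less.hyps[OF cd(1) en(1) _ g(1)] by blast
    then show ?thesis using acyc_conc[OF ge en(2)] g(3) dd \<open>acyclic_map d\<close> by simp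
  qed
qed

lemma Io_mem: "x \<in> (I_o :: (nat list \<Rightarrow> 'k::field) set) \<longleftrightarrow> x \<in> EFSym \<and> (\<forall>f\<in>supp x. \<not> acyclic_map f)"
  by (simp add: I_o_def span_basis_def)

lemma Ho_mem: "x \<in> (H_o :: (nat list \<Rightarrow> 'k::field) set) \<longleftrightarrow> x \<in> EFSym \<and> (\<forall>f\<in>supp x. acyclic_map f)"
  by (simp add: H_o_def span_basis_def)

lemma EFSym_endo: "x \<in> EFSym \<Longrightarrow> f \<in> supp x \<Longrightarrow> is_endo f"
  by (auto simp: EFSym_def)

lemma mult_Io:
  assumes x: "x \<in> (I_o :: (nat list \<Rightarrow> 'k::field) set)" and y: "y \<in> EFSym"
  shows "mult x y \<in> I_o \<and> mult y x \<in> I_o"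
proof -
  have xE: "x \<in> EFSym" and xn: "\<forall>f\<in>supp x. \<not> acyclic_map f" using x by (auto simp: Io_mem)
  have 1: "mult x y \<in> I_o"
    unfolding Io_mem
  proof (intro conjI ballI)
    show "mult x y \<in> EFSym" by (rule mult_EFSym[OF xE y])
    fix h assume "h \<in> supp (mult x y)"
    then obtain f g where fg: "f \<in> supp x" "g \<in> supp y" "h = conc f g" using mult_supp by blast
    show "\<not> acyclic_map h"
      using acyc_conc[OF EFSym_endo[OF xE fg(1)] EFSym_endo[OF y fg(2)]] fg xn by blast
  qed
  have 2: "mult y x \<in> I_o"
    unfolding Io_mem
  proof (intro conjI ballI)
    show "mult y x \<in> EFSym" by (rule mult_EFSym[OF y xE])
    fix h assume "h \<in> supp (mult y x)"
    then obtain g f where fg: "g \<in> supp y" "f \<in> supp x" "h = conc g f" using mult_supp by blast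
    show "\<not> acyclic_map h"
      using acyc_conc[OF EFSym_endo[OF y fg(1)] EFSym_endo[OF xE fg(2)]] fg xn by blast
  qed
  show ?thesis using 1 2 by blast
qed

lemma mult_Ho:
  assumes x: "x \<in> (H_o :: (nat list \<Rightarrow> 'k::field) set)" and y: "y \<in> H_o"
  shows "mult x y \<in> H_o"
  unfolding Ho_mem
proof (intro conjI ballI)
  have xE: "x \<in> EFSym" and xn: "\<forall>f\<in>supp x. acyclic_map f" using x by (auto simp: Ho_mem)
  have yE: "y \<in> EFSym" and yn: "\<forall>f\<in>supp y. acyclic_map f" using y by (auto simp: Ho_mem)
  show "mult x y \<in> EFSym" by (rule mult_EFSym[OF xE yE])
  fix h assume "h \<in> supp (mult x y)"
  then obtain f g where fg: "f \<in> supp x" "g \<in> supp y" "h = conc f g" using mult_supp by blast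
  show "acyclic_map h"
    using acyc_conc[OF EFSym_endo[OF xE fg(1)] EFSym_endo[OF yE fg(2)]] fg xn yn by blast
qed

lemma coprod_Io:
  assumes x: "x \<in> (I_o :: (nat list \<Rightarrow> 'k::field) set)"
  shows "coprod x \<in> I_o_tensor"
proof -
  have xE: "x \<in> EFSym" and xn: "\<forall>f\<in>supp x. \<not> acyclic_map f" using x by (auto simp: Io_mem)
  have "\<forall>p\<in>supp (coprod x). \<not> acyclic_map (fst p) \<or> \<not> acyclic_map (snd p)"
  proof
    fix p assume "p \<in> supp (coprod x)"
    then obtain f where f: "f \<in> supp x" "coprod_coeff f (fst p) (snd p) \<noteq> 0" using coprod_supp by blast
    show "\<not> acyclic_map (fst p) \<or> \<not> acyclic_map (snd p)"
      using coeff_acyc[OF EFSym_endo[OF xE f(1)] f(2)] xn f(1) by blast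
  qed
  then show ?thesis using coprod_EFSym2[OF xE] unfolding I_o_tensor_def by (auto simp: case_prod_beta)
qed

lemma coprod_Ho:
  assumes x: "x \<in> (H_o :: (nat list \<Rightarrow> 'k::field) set)"
  shows "coprod x \<in> H_o_tensor"
proof -
  have xE: "x \<in> EFSym" and xn: "\<forall>f\<in>supp x. acyclic_map f" using x by (auto simp: Ho_mem)
  have "\<forall>p\<in>supp (coprod x). acyclic_map (fst p) \<and> acyclic_map (snd p)"
  proof
    fix p assume "p \<in> supp (coprod x)"
    then obtain f where f: "f \<in> supp x" "coprod_coeff f (fst p) (snd p) \<noteq> 0" using coprod_supp by blast
    show "acyclic_map (fst p) \<and> acyclic_map (snd p)"
      using coeff_acyc[OF EFSym_endo[OF xE f(1)] f(2)] xn f(1) by blast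
  qed
  then show ?thesis using coprod_EFSym2[OF xE] unfolding H_o_tensor_def by (auto simp: case_prod_beta)
qed

lemma antipode_Io:
  assumes S: "is_antipode S" and x: "x \<in> (I_o :: (nat list \<Rightarrow> 'k::field) set)"
  shows "S x \<in> I_o"
  unfolding Io_mem
proof (intro conjI ballI)
  have xE: "x \<in> EFSym" and xn: "\<forall>f\<in>supp x. \<not> acyclic_map f" using x by (auto simp: Io_mem)
  show "S x \<in> EFSym" by (rule S_EFSym[OF S xE])
  fix h assume "h \<in> supp (S x)"
  then have "S x h \<noteq> 0" by (simp add: supp_def)
  moreover have "linear_on S" using S by (simp add: is_antipode_def)
  ultimately obtain f where f: "f \<in> supp x" "S (bas f) h \<noteq> 0" using S_lin xE by blast
  show "\<not> acyclic_map h"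
    using antipode_I[OF S EFSym_endo[OF xE f(1)]] xn f by (simp add: supp_def)
qed

lemma antipode_Ho:
  assumes S: "is_antipode S" and x: "x \<in> (H_o :: (nat list \<Rightarrow> 'k::field) set)"
  shows "S x \<in> H_o"
  unfolding Ho_mem
proof (intro conjI ballI)
  have xE: "x \<in> EFSym" and xn: "\<forall>f\<in>supp x. acyclic_map f" using x by (auto simp: Ho_mem)
  show "S x \<in> EFSym" by (rule S_EFSym[OF S xE])
  fix h assume "h \<in> supp (S x)"
  then have "S x h \<noteq> 0" by (simp add: supp_def)
  moreover have "linear_on S" using S by (simp add: is_antipode_def)
  ultimately obtain f where f: "f \<in> supp x" "S (bas f) h \<noteq> 0" using S_lin xE by blast
  show "acyclic_map h"
    using antipode_H[OF S EFSym_endo[OF xE f(1)]] xn f by (simp add: supp_def)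
qed

lemma ideal_part: "hopf_ideal (I_o :: (nat list \<Rightarrow> 'k::field) set) I_o_tensor"
  unfolding hopf_ideal_def
proof (intro conjI)
  show "(I_o :: (nat list \<Rightarrow> 'k) set) \<subseteq> EFSym" by (auto simp: Io_mem)
  show "\<forall>x\<in>(I_o :: (nat list \<Rightarrow> 'k) set). \<forall>y\<in>EFSym. mult x y \<in> I_o \<and> mult y x \<in> I_o"
    using mult_Io by blast
  show "\<forall>x\<in>(I_o :: (nat list \<Rightarrow> 'k) set). coprod x \<in> I_o_tensor" using coprod_Io by blast
  show "\<forall>x\<in>(I_o :: (nat list \<Rightarrow> 'k) set). counit x = 0"
  proof
    fix x :: "nat list \<Rightarrow> 'k" assume "x \<in> I_o"
    then have "[] \<notin> supp x" using acyc_nil by (auto simp: Io_mem)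
    then show "counit x = 0" by (simp add: counit_def supp_def)
  qed
  show "\<forall>S. is_antipode S \<longrightarrow> S ` (I_o :: (nat list \<Rightarrow> 'k) set) \<subseteq> I_o"
    using antipode_Io by blast
qed

lemma sub_part: "hopf_subalgebra (H_o :: (nat list \<Rightarrow> 'k::field) set) H_o_tensor"
  unfolding hopf_subalgebra_def
proof (intro conjI)
  show "(H_o :: (nat list \<Rightarrow> 'k) set) \<subseteq> EFSym" by (auto simp: Ho_mem)
  show "(unit_el :: nat list \<Rightarrow> 'k) \<in> H_o"
  proof -
    have "(bas [] :: nat list \<Rightarrow> 'k) \<in> EFSym" by (rule bas_EFSym) (simp add: is_endo_def)
    moreover have "supp (bas [] :: nat list \<Rightarrow> 'k) = {[]}" by (rule supp_bas)
    ultimately show ?thesis unfolding Ho_mem unit_el_def using acyc_nil by simp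
  qed
  show "\<forall>x\<in>(H_o :: (nat list \<Rightarrow> 'k) set). \<forall>y\<in>H_o. mult x y \<in> H_o" using mult_Ho by blast
  show "\<forall>x\<in>(H_o :: (nat list \<Rightarrow> 'k) set). coprod x \<in> H_o_tensor" using coprod_Ho by blast
  show "\<forall>S. is_antipode S \<longrightarrow> S ` (H_o :: (nat list \<Rightarrow> 'k) set) \<subseteq> H_o"
    using antipode_Ho by blast
qed

definition pr :: "(nat list \<Rightarrow> 'k::field) \<Rightarrow> nat list \<Rightarrow> 'k" where
  "pr x = (\<lambda>h. if acyclic_map h then x h else 0)"

lemma pr_supp: "supp (pr x) \<subseteq> supp x"
  by (auto simp: supp_def pr_def)

lemma pr_EFSym: "x \<in> EFSym \<Longrightarrow> pr x \<in> EFSym"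
  using pr_supp unfolding EFSym_def by (blast intro: finite_subset)

lemma pr_lin: "linear_on pr"
  unfolding linear_on_def by (simp add: pr_def smult_el_def fun_eq_iff)

lemma pr_image: "pr ` EFSym = (H_o :: (nat list \<Rightarrow> 'k::field) set)"
proof
  show "pr ` EFSym \<subseteq> (H_o :: (nat list \<Rightarrow> 'k) set)"
  proof
    fix y :: "nat list \<Rightarrow> 'k" assume "y \<in> pr ` EFSym"
    then obtain x where x: "x \<in> EFSym" "y = pr x" by blast
    have "\<forall>f\<in>supp y. acyclic_map f" using x(2) by (auto simp: supp_def pr_def split: if_splits)
    then show "y \<in> H_o" using pr_EFSym[OF x(1)] x(2) by (simp add: Ho_mem)
  qed
next
  show "(H_o :: (nat list \<Rightarrow> 'k) set) \<subseteq> pr ` EFSym"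
  proof
    fix y :: "nat list \<Rightarrow> 'k" assume y: "y \<in> H_o"
    then have yE: "y \<in> EFSym" and yn: "\<forall>f\<in>supp y. acyclic_map f" by (auto simp: Ho_mem)
    have "pr y = y"
    proof
      fix h show "pr y h = y h"
        using yn by (cases "acyclic_map h") (auto simp: pr_def supp_def)
    qed
    then show "y \<in> pr ` EFSym" using yE by (metis image_eqI)
  qed
qed

lemma pr_kernel: "{x \<in> EFSym. pr x = (\<lambda>_. 0)} = (I_o :: (nat list \<Rightarrow> 'k::field) set)"
proof (intro set_eqI iffI)
  fix x :: "nat list \<Rightarrow> 'k" assume "x \<in> {x \<in> EFSym. pr x = (\<lambda>_. 0)}"
  then have xE: "x \<in> EFSym" and z: "pr x = (\<lambda>_. 0)" by auto
  have "\<forall>f\<in>supp x. \<not> acyclic_map f"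
  proof (intro ballI notI)
    fix f assume "f \<in> supp x" "acyclic_map f"
    then have "pr x f \<noteq> 0" by (simp add: pr_def supp_def)
    then show False using z by simp
  qed
  then show "x \<in> I_o" using xE by (simp add: Io_mem)
next
  fix x :: "nat list \<Rightarrow> 'k" assume "x \<in> I_o"
  then have xE: "x \<in> EFSym" and xn: "\<forall>f\<in>supp x. \<not> acyclic_map f" by (auto simp: Io_mem)
  have "pr x = (\<lambda>_. 0)"
  proof
    fix h show "pr x h = 0" using xn by (auto simp: pr_def supp_def)
  qed
  then show "x \<in> {x \<in> EFSym. pr x = (\<lambda>_. 0)}" using xE by simp
qed

lemma pr_unit: "pr (unit_el :: nat list \<Rightarrow> 'k::field) = unit_el"
proof
  fix h show "pr (unit_el :: nat list \<Rightarrow> 'k) h = unit_el h"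
    using acyc_nil by (auto simp: pr_def unit_el_def bas_def)
qed

lemma pr_counit: "counit (pr x) = counit x"
  using acyc_nil by (simp add: counit_def pr_def)

lemma pr_mult:
  assumes xE: "x \<in> EFSym" and yE: "y \<in> EFSym"
  shows "pr (mult x y) = mult (pr x) (pr y)"
proof
  fix h
  have fx: "finite (supp x)" and fy: "finite (supp y)" using xE yE by (auto simp: EFSym_def)
  have R: "mult (pr x) (pr y) h = (\<Sum>f\<in>supp x. \<Sum>g\<in>supp y. if conc f g = h then pr x f * pr y g else 0)"
    by (rule mult_sup[OF fx pr_supp fy pr_supp])
  show "pr (mult x y) h = mult (pr x) (pr y) h"
  proof (cases "acyclic_map h")
    case True
    have "pr (mult x y) h = (\<Sum>f\<in>supp x. \<Sum>g\<in>supp y. if conc f g = h then x f * y g else 0)"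
      using True by (simp add: pr_def mult_def)
    also have "\<dots> = (\<Sum>f\<in>supp x. \<Sum>g\<in>supp y. if conc f g = h then pr x f * pr y g else 0)"
    proof (intro sum.cong refl)
      fix f g assume f: "f \<in> supp x" and g: "g \<in> supp y"
      show "(if conc f g = h then x f * y g else 0) = (if conc f g = h then pr x f * pr y g else 0)"
        using acyc_conc[OF EFSym_endo[OF xE f] EFSym_endo[OF yE g]] True by (auto simp: pr_def)
    qed
    finally show ?thesis using R by simp
  next
    case False
    have "(\<Sum>f\<in>supp x. \<Sum>g\<in>supp y. if conc f g = h then pr x f * pr y g else 0) = 0"
    proof (intro sum.neutral ballI)
      fix f g assume f: "f \<in> supp x" and g: "g \<in> supp y"
      show "(if conc f g = h then pr x f * pr y g else 0) = 0"
        using acyc_conc[OF EFSym_endo[OF xE f] EFSym_endo[OF yE g]] False by (auto simp: pr_def)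
    qed
    then show ?thesis using R False by (simp add: pr_def)
  qed
qed

lemma pr_bas: "pr (bas c :: nat list \<Rightarrow> 'k::field) a = (if a = c \<and> acyclic_map a then 1 else 0)"
  by (simp add: pr_def bas_def)

lemma pr_coprod:
  assumes xE: "x \<in> (EFSym :: (nat list \<Rightarrow> 'k::field) set)"
  shows "coprod (pr x) = tensor_map pr pr (coprod x)"
proof
  fix p :: "nat list \<times> nat list"
  obtain a b where p: "p = (a,b)" by fastforce
  have fx: "finite (supp x)" using xE by (simp add: EFSym_def)
  let ?t = "coprod x"
  have ft: "finite (supp ?t)" using coprod_EFSym2[OF xE] by (simp add: EFSym2_def)
  have "coprod (pr x) (a,b) = (\<Sum>f\<in>supp (pr x). pr x f * of_nat (coprod_coeff f a b))"
    by (simp add: coprod_def)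
  also have "\<dots> = (\<Sum>f\<in>supp x. pr x f * of_nat (coprod_coeff f a b))"
  proof (rule sum.mono_neutral_left[OF fx pr_supp])
    show "\<forall>i\<in>supp x - supp (pr x). pr x i * of_nat (coprod_coeff i a b) = 0"
      by (simp add: supp_def)
  qed
  also have "\<dots> = (\<Sum>f\<in>supp x. if acyclic_map a \<and> acyclic_map b then x f * of_nat (coprod_coeff f a b) else 0)"
  proof (rule sum.cong[OF refl])
    fix f assume f: "f \<in> supp x"
    show "pr x f * of_nat (coprod_coeff f a b) = (if acyclic_map a \<and> acyclic_map b then x f * of_nat (coprod_coeff f a b) else 0)"
    proof (cases "coprod_coeff f a b = 0")
      case True then show ?thesis by simp
    next
      case False
      then show ?thesis using coeff_acyc[OF EFSym_endo[OF xE f] False] by (simp add: pr_def)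
    qed
  qed
  also have "\<dots> = (if acyclic_map a \<and> acyclic_map b then ?t (a,b) else 0)"
  proof (cases "acyclic_map a \<and> acyclic_map b")
    case True then show ?thesis by (simp add: coprod_def)
  next
    case False
    then have F0: "(acyclic_map a \<and> acyclic_map b) = False" by simp
    show ?thesis unfolding F0 if_False by simp
  qed
  finally have L: "coprod (pr x) (a,b) = (if acyclic_map a \<and> acyclic_map b then ?t (a,b) else 0)" .
  have "tensor_map pr pr ?t (a,b) = (\<Sum>q\<in>supp ?t. ?t q * pr (bas (fst q)) a * pr (bas (snd q)) b)"
    by (simp add: tensor_map_def case_prod_beta)
  also have "\<dots> = (\<Sum>q\<in>supp ?t. if (a,b) = q then (if acyclic_map a \<and> acyclic_map b then ?t (a,b) else 0) else 0)"
  proof (rule sum.cong[OF refl])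
    fix q :: "nat list \<times> nat list"
    obtain c d where q: "q = (c,d)" by fastforce
    show "?t q * pr (bas (fst q)) a * pr (bas (snd q)) b = (if (a,b) = q then (if acyclic_map a \<and> acyclic_map b then ?t (a,b) else 0) else 0)"
      unfolding q by (simp add: pr_bas)
  qed
  also have "\<dots> = (if (a,b) \<in> supp ?t then (if acyclic_map a \<and> acyclic_map b then ?t (a,b) else 0) else 0)"
    by (rule sum.delta'[OF ft])
  also have "\<dots> = (if acyclic_map a \<and> acyclic_map b then ?t (a,b) else 0)"
    by (simp add: supp_def)
  finally show "coprod (pr x) p = tensor_map pr pr ?t p" using L p by simp
qed

lemma quot_part: "quotient_iso (I_o :: (nat list \<Rightarrow> 'k::field) set) H_o"
  unfolding quotient_iso_def
proof (rule exI[of _ pr], intro conjI ballI)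
  show "linear_on (pr :: (nat list \<Rightarrow> 'k) \<Rightarrow> _)" by (rule pr_lin)
  show "pr ` EFSym = (H_o :: (nat list \<Rightarrow> 'k) set)" by (rule pr_image)
  show "{x \<in> EFSym. pr x = (\<lambda>_. 0)} = (I_o :: (nat list \<Rightarrow> 'k) set)" by (rule pr_kernel)
  show "pr (unit_el :: nat list \<Rightarrow> 'k) = unit_el" by (rule pr_unit)
  fix x y :: "nat list \<Rightarrow> 'k"
  assume "x \<in> EFSym" "y \<in> EFSym"
  then show "pr (mult x y) = mult (pr x) (pr y)" by (rule pr_mult)
next
  fix x :: "nat list \<Rightarrow> 'k" assume "x \<in> EFSym"
  show "counit (pr x) = counit x" by (rule pr_counit)
next
  fix x :: "nat list \<Rightarrow> 'k" assume "x \<in> EFSym"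
  then show "coprod (pr x) = tensor_map pr pr (coprod x)" by (rule pr_coprod)
qed

theorem mainTheorem14:
  shows "hopf_ideal (I_o :: (nat list \<Rightarrow> 'k::field) set) I_o_tensor
       \<and> hopf_subalgebra (H_o :: (nat list \<Rightarrow> 'k) set) H_o_tensor
       \<and> quotient_iso (I_o :: (nat list \<Rightarrow> 'k) set) H_o"
  using ideal_part sub_part quot_part by blast

end
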